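(* Let $n,k$ be integers with $2\le k\le n-1$, let $\varepsilon,\delta>0$, and let $$m:=\frac{12n(n-1)^2}{\varepsilon^2(n-k)^2k}\ln\frac{2n^2}{\delta}.$$ Let $\mathcal{I}=(I_1,\dots,I_m)$ be a sequence of random $k$-element subsets of $[n]=\{1,\dots,n\}$, sampled independently and uniformly from all $k$-element subsets of $[n]$, and define $$\mathcal{S}_{\mathcal{I}}:=\{M\in\mathbb{R}^{n\times n}: M_{I_i}\succeq 0 \text{ for all } i\in[m]\}.$$ Then with probability at least $1-\delta$, $$\overline{\mathrm{dist}}_F(\mathcal{S}_{\mathcal{I}},\mathcal{S}^n_+)\le (1+\varepsilon)\frac{n-k}{n+k-2}.$$
   Context: For $M\in\mathbb{R}^{n\times n}$ and $J\subseteq[n]$, $M_J$ is the principal submatrix of $M$ with rows and columns indexed by $J$; $A\succeq 0$ means $A$ is a real symmetric positive semidefinite (PSD) matrix. $\mathcal{S}^n_+$ denotes the cone of $n\times n$ real symmetric PSD matrices. For a matrix $M$, $\mathrm{dist}_F(M,\mathcal{S}^n_+)=\inf_{N\in\mathcal{S}^n_+}\|M-N\|_F$, where $\|\cdot\|_F$ is the Frobenius norm. For a set $\mathcal{K}$ of $n\times n$ matrices, $\overline{\mathrm{dist}}_F(\mathcal{K},\mathcal{S}^n_+)=\sup_{M\in\mathcal{K},\ \|M\|_F=1}\mathrm{dist}_F(M,\mathcal{S}^n_+)$. *)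

theory Defs
  imports "HOL-Probability.Probability"
begin

text \<open>Real matrices are represented as functions nat => nat => real; only the
entries with indices in {..<n} (standing for [n] = {1..n}) matter.\<close>

definition psd_sub :: "(nat \<Rightarrow> nat \<Rightarrow> real) \<Rightarrow> nat set \<Rightarrow> bool" where
  "psd_sub M J \<longleftrightarrow> (\<forall>i\<in>J. \<forall>j\<in>J. M i j = M j i) \<and>
     (\<forall>x::nat \<Rightarrow> real. 0 \<le> (\<Sum>i\<in>J. \<Sum>j\<in>J. x i * M i j * x j))"

definition frob :: "nat \<Rightarrow> (nat \<Rightarrow> nat \<Rightarrow> real) \<Rightarrow> real" where
  "frob n M = sqrt (\<Sum>i<n. \<Sum>j<n. (M i j)\<^sup>2)"

definition dist_psd :: "nat \<Rightarrow> (nat \<Rightarrow> nat \<Rightarrow> real) \<Rightarrow> real" where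
  "dist_psd n M = Inf {frob n (\<lambda>i j. M i j - N i j) | N. psd_sub N {..<n}}"

definition dist_bar :: "nat \<Rightarrow> (nat \<Rightarrow> nat \<Rightarrow> real) set \<Rightarrow> real" where
  "dist_bar n K = Sup {dist_psd n M | M. M \<in> K \<and> frob n M = 1}"

definition S_I :: "nat \<Rightarrow> (nat \<Rightarrow> nat set) \<Rightarrow> (nat \<Rightarrow> nat \<Rightarrow> real) set" where
  "S_I m I = {M. \<forall>i<m. psd_sub M (I i)}"

definition ksubsets :: "nat \<Rightarrow> nat \<Rightarrow> nat set set" where
  "ksubsets n k = {J. J \<subseteq> {..<n} \<and> card J = k}"

text \<open>m independent uniform samples from the k-subsets of [n]: uniform distribution
on sequences (extensional functions on {..<m}) of k-subsets.\<close>
definition sample_pmf :: "nat \<Rightarrow> nat \<Rightarrow> nat \<Rightarrow> (nat \<Rightarrow> nat set) pmf" where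
  "sample_pmf n k m = pmf_of_set (PiE {..<m} (\<lambda>_. ksubsets n k))"

end

theory Submission
  imports Defs
begin

lemma ln_lower: fixes u::real assumes "0 \<le> u" shows "2*u/(2+u) \<le> ln (1+u)"
proof -
  have "(\<lambda>x. ln (1+x) - 2*x/(2+x)) 0 \<le> (\<lambda>x. ln (1+x) - 2*x/(2+x)) u"
  proof (rule DERIV_nonneg_imp_nondecreasing[OF assms])
    fix x::real assume x: "0 \<le> x" "x \<le> u"
    have "((\<lambda>x. ln (1+x) - 2*x/(2+x)) has_real_derivative (1/(1+x) - 4/(2+x)^2)) (at x)"
      using x by (auto intro!: derivative_eq_intros simp: field_simps power2_eq_square)
    moreover have "0 \<le> 1/(1+x) - 4/(2+x)^2"
    proof -
      have a: "1+x > 0" "2+x>0" using x by auto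
      have "1/(1+x) - 4/(2+x)^2 = x^2/((1+x)*(2+x)^2)" using a
        by (simp add: divide_simps) (simp add: power2_eq_square algebra_simps)
      thus ?thesis using x by simp
    qed
    ultimately show "\<exists>y. ((\<lambda>x. ln (1+x) - 2*x/(2+x)) has_real_derivative y) (at x) \<and> 0 \<le> y" by blast
  qed
  thus ?thesis by simp
qed

lemma exp_neg_upper: fixes u::real assumes "0 \<le> u" shows "exp (-u) \<le> 1 - u + u^2/2"
proof -
  have "(\<lambda>x. 1 - x + x^2/2 - exp (-x)) 0 \<le> (\<lambda>x. 1 - x + x^2/2 - exp (-x)) u"
  proof (rule DERIV_nonneg_imp_nondecreasing[OF assms])
    fix x::real assume x: "0 \<le> x" "x \<le> u"
    have "((\<lambda>x. 1 - x + x^2/2 - exp (-x)) has_real_derivative (-1 + x + exp (-x))) (at x)"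
      by (auto intro!: derivative_eq_intros)
    moreover have "0 \<le> -1 + x + exp (-x)" using exp_ge_add_one_self[of "-x"] by simp
    ultimately show "\<exists>y. ((\<lambda>x. 1 - x + x^2/2 - exp (-x)) has_real_derivative y) (at x) \<and> 0 \<le> y" by blast
  qed
  thus ?thesis by simp
qed


lemma card_filter_sum: "finite A \<Longrightarrow> real (card {t\<in>A. P t}) = (\<Sum>t\<in>A. if P t then 1 else 0)"
  by (simp add: sum.If_cases Int_def conj_commute)

lemma mgf_eq:
  assumes K: "finite K" and B: "B \<subseteq> K"
  shows "(\<Sum>f\<in>PiE {..<m} (\<lambda>_. K). exp (s * real (card {t\<in>{..<m}. f t \<in> B})))
         = (\<Sum>J\<in>K. exp (s * (if J \<in> B then 1 else 0)))^m"
proof -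
  have "(\<Sum>f\<in>PiE {..<m} (\<lambda>_. K). exp (s * real (card {t\<in>{..<m}. f t \<in> B})))
      = (\<Sum>f\<in>PiE {..<m} (\<lambda>_. K). \<Prod>t\<in>{..<m}. exp (s * (if f t \<in> B then 1 else 0)))"
  proof (rule sum.cong[OF refl])
    fix f
    have "s * real (card {t\<in>{..<m}. f t \<in> B}) = (\<Sum>t\<in>{..<m}. s * (if f t \<in> B then 1 else 0))"
      using card_filter_sum[of "{..<m}" "\<lambda>t. f t \<in> B"] by (simp add: sum_distrib_left)
    thus "exp (s * real (card {t\<in>{..<m}. f t \<in> B})) = (\<Prod>t\<in>{..<m}. exp (s * (if f t \<in> B then 1 else 0)))"
      by (simp add: exp_sum)
  qed
  also have "\<dots> = (\<Prod>t\<in>{..<m}. \<Sum>J\<in>K. exp (s * (if J \<in> B then 1 else 0)))"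
    by (rule prod_sum_PiE[symmetric]) (use K in auto)
  also have "\<dots> = (\<Sum>J\<in>K. exp (s * (if J \<in> B then 1 else 0)))^m" by simp
  finally show ?thesis .
qed

lemma sum_ind_exp:
  assumes K: "finite K" and B: "B \<subseteq> K" and Kne: "K \<noteq> {}"
  shows "(\<Sum>J\<in>K. exp (s * (if J \<in> B then 1 else 0))) = real (card K) * (1 + real (card B) / real (card K) * (exp s - 1))"
proof -
  have "(\<Sum>J\<in>K. exp (s * (if J \<in> B then 1 else 0))) = (\<Sum>J\<in>K. if J \<in> B then exp s else 1)"
    by (rule sum.cong) auto
  also have "\<dots> = real (card B) * exp s + real (card (K - B))"
    using K B by (simp add: sum.If_cases Int_absorb1 Int_absorb2 Diff_eq[symmetric] Int_commute)
  also have "real (card (K - B)) = real (card K) - real (card B)"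
    using K B by (simp add: card_Diff_subset finite_subset card_mono of_nat_diff)
  finally have e: "(\<Sum>J\<in>K. exp (s * (if J \<in> B then 1 else 0))) = real (card B) * exp s + (real (card K) - real (card B))" .
  have "real (card K) > 0" using K Kne by (simp add: card_gt_0_iff)
  then show ?thesis unfolding e by (simp add: field_simps)
qed

lemma mgf_bound:
  assumes K: "finite K" and B: "B \<subseteq> K" and Kne: "K \<noteq> {}"
  shows "(\<Sum>f\<in>PiE {..<m} (\<lambda>_. K). exp (s * real (card {t\<in>{..<m}. f t \<in> B})))
         \<le> real (card (PiE {..<m} (\<lambda>_. K))) * exp (real m * (real (card B) / real (card K)) * (exp s - 1))"
proof -
  define q where "q = real (card B) / real (card K)"
  have q0: "0 \<le> q" and q1: "q \<le> 1" using K B Kne card_mono[OF K B] by (auto simp: q_def divide_simps card_gt_0_iff)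
  have pos: "0 \<le> 1 + q * (exp s - 1)"
  proof -
    have "q * (exp s - 1) \<ge> q * (-1)" using q0 by (intro mult_left_mono) auto
    thus ?thesis using q1 by simp
  qed
  have "(\<Sum>f\<in>PiE {..<m} (\<lambda>_. K). exp (s * real (card {t\<in>{..<m}. f t \<in> B})))
        = (real (card K) * (1 + q * (exp s - 1)))^m"
    using mgf_eq[OF K B] sum_ind_exp[OF K B Kne] by (simp add: q_def)
  also have "\<dots> = real (card K)^m * (1 + q * (exp s - 1))^m" by (simp add: power_mult_distrib)
  also have "\<dots> \<le> real (card K)^m * (exp (q * (exp s - 1)))^m"
    by (intro mult_left_mono power_mono pos) auto
  also have "(exp (q * (exp s - 1)))^m = exp (real m * q * (exp s - 1))"
    by (simp add: exp_of_nat_mult[symmetric] mult.assoc)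
  also have "real (card K)^m = real (card (PiE {..<m} (\<lambda>_. K)))"
    by (simp add: card_PiE)
  finally show ?thesis by (simp add: q_def)
qed

lemma markov_exp:
  assumes "finite S"
  shows "real (card {f\<in>S. a \<le> Y f}) * exp a \<le> (\<Sum>f\<in>S. exp (Y f))"
proof -
  have "real (card {f\<in>S. a \<le> Y f}) * exp a = (\<Sum>f\<in>{f\<in>S. a \<le> Y f}. exp a)" by simp
  also have "\<dots> \<le> (\<Sum>f\<in>{f\<in>S. a \<le> Y f}. exp (Y f))" by (intro sum_mono) auto
  also have "\<dots> \<le> (\<Sum>f\<in>S. exp (Y f))" using assms by (intro sum_mono2) auto
  finally show ?thesis .
qed

lemma exp_shift: fixes x y a :: real assumes "x * exp a \<le> y" shows "x \<le> y * exp (-a)"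
proof -
  have "x = x * exp a * exp (-a)" by (simp add: exp_minus)
  also have "\<dots> \<le> y * exp (-a)" using assms by (intro mult_right_mono) auto
  finally show ?thesis .
qed

lemma chernoff_up:
  assumes K: "finite K" and B: "B \<subseteq> K" and Kne: "K \<noteq> {}" and u: "0 \<le> u" "u \<le> 1"
    and mu: "\<mu> = real m * (real (card B) / real (card K))"
  shows "real (card {f\<in>PiE {..<m} (\<lambda>_. K). (1+u)*\<mu> \<le> real (card {t\<in>{..<m}. f t \<in> B})})
         \<le> exp (-\<mu>*u^2/3) * real (card (PiE {..<m} (\<lambda>_. K)))"
proof -
  define S where "S = PiE {..<m} (\<lambda>_. K)"
  define Z where "Z f = real (card {t\<in>{..<m}. f t \<in> B})" for f
  define r where "r = ln (1+u)"
  have s0: "0 \<le> r" using u by (simp add: r_def)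
  have es: "exp r = 1 + u" using u by (simp add: r_def)
  have mu0: "0 \<le> \<mu>" using mu by simp
  have fin: "finite S" using K by (simp add: S_def finite_PiE)
  have sub: "{f\<in>S. (1+u)*\<mu> \<le> Z f} \<subseteq> {f\<in>S. r * ((1+u)*\<mu>) \<le> r * Z f}"
    using s0 by (auto intro: mult_left_mono)
  have "real (card {f\<in>S. (1+u)*\<mu> \<le> Z f}) * exp (r * ((1+u)*\<mu>))
      \<le> real (card {f\<in>S. r * ((1+u)*\<mu>) \<le> r * Z f}) * exp (r * ((1+u)*\<mu>))"
    using card_mono[OF _ sub] fin by (intro mult_right_mono) auto
  also have "\<dots> \<le> (\<Sum>f\<in>S. exp (r * Z f))" by (rule markov_exp[OF fin])
  also have "\<dots> \<le> real (card S) * exp (\<mu> * u)"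
    using mgf_bound[OF K B Kne, where m=m and s=r] by (simp add: S_def Z_def mu es)
  finally have "real (card {f\<in>S. (1+u)*\<mu> \<le> Z f}) \<le> real (card S) * exp (\<mu> * u) * exp (- (r * ((1+u)*\<mu>)))"
    by (rule exp_shift)
  hence 1: "real (card {f\<in>S. (1+u)*\<mu> \<le> Z f}) \<le> real (card S) * exp (\<mu> * u - r * ((1+u)*\<mu>))"
    by (simp add: exp_diff exp_minus divide_simps)
  have "\<mu> * u - r * ((1+u)*\<mu>) \<le> -\<mu>*u^2/3"
  proof -
    have l: "2*u/(2+u) \<le> r" using ln_lower[OF u(1)] by (simp add: r_def)
    have "u^2/3 \<le> (1+u)*(2*u/(2+u)) - u"
    proof -
      have "(1+u)*(2*u/(2+u)) - u = u^2/(2+u)" using u by (simp add: field_simps power2_eq_square)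
      moreover have "u^2/3 \<le> u^2/(2+u)" using u by (intro divide_left_mono) auto
      ultimately show ?thesis by simp
    qed
    also have "\<dots> \<le> (1+u) * r - u" using l u by (intro diff_right_mono mult_left_mono) auto
    finally have "u^2/3 \<le> (1+u) * r - u" .
    hence "\<mu>*(u^2/3) \<le> \<mu>*((1+u) * r - u)" using mu0 by (rule mult_left_mono)
    thus ?thesis by (simp add: algebra_simps)
  qed
  hence "real (card S) * exp (\<mu> * u - r * ((1+u)*\<mu>)) \<le> real (card S) * exp (-\<mu>*u^2/3)" by (intro mult_left_mono) auto
  with 1 show ?thesis by (simp add: S_def Z_def mult.commute)
qed

lemma chernoff_lo:
  assumes K: "finite K" and B: "B \<subseteq> K" and Kne: "K \<noteq> {}" and u: "0 \<le> u"
    and mu: "\<mu> = real m * (real (card B) / real (card K))"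
  shows "real (card {f\<in>PiE {..<m} (\<lambda>_. K). real (card {t\<in>{..<m}. f t \<in> B}) \<le> (1-u)*\<mu>})
         \<le> exp (-\<mu>*u^2/3) * real (card (PiE {..<m} (\<lambda>_. K)))"
proof -
  define S where "S = PiE {..<m} (\<lambda>_. K)"
  define Z where "Z f = real (card {t\<in>{..<m}. f t \<in> B})" for f
  have mu0: "0 \<le> \<mu>" using mu by simp
  have fin: "finite S" using K by (simp add: S_def finite_PiE)
  have sub: "{f\<in>S. Z f \<le> (1-u)*\<mu>} \<subseteq> {f\<in>S. (-u)*((1-u)*\<mu>) \<le> (-u) * Z f}"
    using u by (auto intro: mult_left_mono)
  have "real (card {f\<in>S. Z f \<le> (1-u)*\<mu>}) * exp ((-u)*((1-u)*\<mu>))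
      \<le> real (card {f\<in>S. (-u)*((1-u)*\<mu>) \<le> (-u) * Z f}) * exp ((-u)*((1-u)*\<mu>))"
    using card_mono[OF _ sub] fin by (intro mult_right_mono) auto
  also have "\<dots> \<le> (\<Sum>f\<in>S. exp ((-u) * Z f))" by (rule markov_exp[OF fin])
  also have "\<dots> \<le> real (card S) * exp (\<mu> * (exp (-u) - 1))"
    using mgf_bound[OF K B Kne, where m=m and s="-u"] by (simp add: S_def Z_def mu)
  also have "\<dots> \<le> real (card S) * exp (\<mu> * (-u + u^2/2))"
    using exp_neg_upper[OF u] mu0 by (intro mult_left_mono) (auto intro!: mult_left_mono)
  finally have "real (card {f\<in>S. Z f \<le> (1-u)*\<mu>}) \<le> real (card S) * exp (\<mu> * (-u + u^2/2)) * exp (- ((-u)*((1-u)*\<mu>)))"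
    by (rule exp_shift)
  hence 1: "real (card {f\<in>S. Z f \<le> (1-u)*\<mu>}) \<le> real (card S) * exp (\<mu> * (-u + u^2/2) - (-u)*((1-u)*\<mu>))"
    by (simp only: mult.assoc exp_add[symmetric] diff_conv_add_uminus)
  have "\<mu> * (-u + u^2/2) - (-u)*((1-u)*\<mu>) \<le> -\<mu>*u^2/3"
  proof -
    have "\<mu> * (-u + u^2/2) - (-u)*((1-u)*\<mu>) = -\<mu>*u^2/2" by (simp add: algebra_simps power2_eq_square)
    also have "\<dots> \<le> -\<mu>*u^2/3" using mu0 by (simp add: divide_simps)
    finally show ?thesis .
  qed
  hence "real (card S) * exp (\<mu> * (-u + u^2/2) - (-u)*((1-u)*\<mu>)) \<le> real (card S) * exp (-\<mu>*u^2/3)" by (intro mult_left_mono) auto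
  with 1 show ?thesis by (simp add: S_def Z_def mult.commute)
qed


lemma card_subsets_with:
  assumes A: "finite A" and x: "x \<in> A" and k: "1 \<le> k"
  shows "card {J. J \<subseteq> A \<and> card J = k \<and> x \<in> J \<and> Q J} = card {J. J \<subseteq> A - {x} \<and> card J = k - 1 \<and> Q (insert x J)}"
proof -
  have eq: "{J. J \<subseteq> A \<and> card J = k \<and> x \<in> J \<and> Q J} = insert x ` {J. J \<subseteq> A - {x} \<and> card J = k - 1 \<and> Q (insert x J)}"
  proof (intro equalityI subsetI)
    fix J assume "J \<in> {J. J \<subseteq> A \<and> card J = k \<and> x \<in> J \<and> Q J}"
    hence J: "J \<subseteq> A" "card J = k" "x \<in> J" "Q J" by auto
    have fJ: "finite J" using J(1) A finite_subset by blast
    have "J - {x} \<in> {J. J \<subseteq> A - {x} \<and> card J = k - 1 \<and> Q (insert x J)}"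
      using J fJ by (auto simp: insert_absorb)
    moreover have "J = insert x (J - {x})" using J by auto
    ultimately show "J \<in> insert x ` {J. J \<subseteq> A - {x} \<and> card J = k - 1 \<and> Q (insert x J)}" by blast
  next
    fix J assume "J \<in> insert x ` {J. J \<subseteq> A - {x} \<and> card J = k - 1 \<and> Q (insert x J)}"
    then obtain J' where J': "J' \<subseteq> A - {x}" "card J' = k - 1" "Q (insert x J')" and JJ: "J = insert x J'" by auto
    have fJ: "finite J'" using J'(1) A finite_subset by blast
    have "x \<notin> J'" using J' by auto
    thus "J \<in> {J. J \<subseteq> A \<and> card J = k \<and> x \<in> J \<and> Q J}" using J' JJ fJ x k by auto
  qed
  have inj: "inj_on (insert x) {J. J \<subseteq> A - {x} \<and> card J = k - 1 \<and> Q (insert x J)}"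
    by (rule inj_onI) (metis Diff_insert_absorb mem_Collect_eq subset_Diff_insert)
  show ?thesis unfolding eq by (rule card_image[OF inj])
qed

definition Bset :: "nat \<Rightarrow> nat \<Rightarrow> nat \<Rightarrow> nat \<Rightarrow> nat set set" where
  "Bset n k i j = {J \<in> ksubsets n k. i \<in> J \<and> j \<in> J}"

lemma card_ksubsets: "card (ksubsets n k) = n choose k"
  unfolding ksubsets_def using n_subsets[of "{..<n}" k] by simp

lemma finite_ksubsets: "finite (ksubsets n k)"
  unfolding ksubsets_def by (rule finite_subset[of _ "Pow {..<n}"]) auto

lemma card_Bset_diag:
  assumes "i < n" "1 \<le> k"
  shows "card (Bset n k i i) = (n - 1) choose (k - 1)"
proof -
  have "Bset n k i i = {J. J \<subseteq> {..<n} \<and> card J = k \<and> i \<in> J \<and> True}"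
    by (auto simp: Bset_def ksubsets_def)
  hence "card (Bset n k i i) = card {J. J \<subseteq> {..<n} - {i} \<and> card J = k - 1 \<and> True}"
    using card_subsets_with[of "{..<n}" i k "\<lambda>_. True"] assms by simp
  also have "\<dots> = (n - 1) choose (k - 1)" using n_subsets[of "{..<n} - {i}" "k - 1"] assms by simp
  finally show ?thesis .
qed

lemma card_Bset_off:
  assumes "i < n" "j < n" "i \<noteq> j" "2 \<le> k"
  shows "card (Bset n k i j) = (n - 2) choose (k - 2)"
proof -
  have "Bset n k i j = {J. J \<subseteq> {..<n} \<and> card J = k \<and> i \<in> J \<and> j \<in> J}"
    by (auto simp: Bset_def ksubsets_def)
  hence "card (Bset n k i j) = card {J. J \<subseteq> {..<n} - {i} \<and> card J = k - 1 \<and> j \<in> insert i J}"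
    using card_subsets_with[of "{..<n}" i k "\<lambda>J. j \<in> J"] assms by simp
  also have "{J. J \<subseteq> {..<n} - {i} \<and> card J = k - 1 \<and> j \<in> insert i J} = {J. J \<subseteq> {..<n} - {i} \<and> card J = k - 1 \<and> j \<in> J \<and> True}"
    using assms by auto
  also have "card \<dots> = card {J. J \<subseteq> {..<n} - {i} - {j} \<and> card J = k - 1 - 1 \<and> True}"
    using card_subsets_with[of "{..<n} - {i}" j "k - 1" "\<lambda>_. True"] assms by simp
  also have "\<dots> = (n - 2) choose (k - 2)" using n_subsets[of "{..<n} - {i} - {j}" "k - 1 - 1"] assms
    by (simp add: card_Diff_singleton_if numeral_2_eq_2)
  finally show ?thesis .
qed

lemma ratio_diag:
  assumes "i < n" "1 \<le> k" "k \<le> n"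
  shows "real (card (Bset n k i i)) / real (card (ksubsets n k)) = real k / real n"
proof -
  define n' where "n' = n - 1"
  define k' where "k' = k - 1"
  have nk: "n = Suc n'" "k = Suc k'" using assms by (auto simp: n'_def k'_def)
  have "Suc k' * (Suc n' choose Suc k') = Suc n' * (n' choose k')" by (rule Suc_times_binomial)
  hence "k * (n choose k) = n * ((n-1) choose (k-1))" using nk by (simp del: binomial_Suc_Suc)
  hence e: "real k * real (n choose k) = real n * real ((n-1) choose (k-1))"
    by (simp only: of_nat_mult[symmetric])
  have pos: "real (n choose k) > 0" using assms by simp
  have "real (card (Bset n k i i)) = real ((n-1) choose (k-1))" using card_Bset_diag[OF assms(1,2)] by simp
  moreover have "real (card (ksubsets n k)) = real (n choose k)" using card_ksubsets[of n k] by simp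
  moreover have "real n > 0" using assms by simp
  ultimately show ?thesis using e pos
    by (simp add: divide_simps)
qed

lemma ratio_off:
  assumes "i < n" "j < n" "i \<noteq> j" "2 \<le> k" "k \<le> n"
  shows "real (card (Bset n k i j)) / real (card (ksubsets n k)) = real k * (real k - 1) / (real n * (real n - 1))"
proof -
  define n' where "n' = n - 2"
  define k' where "k' = k - 2"
  have nk: "n = Suc (Suc n')" "k = Suc (Suc k')" using assms by (auto simp: n'_def k'_def)
  have e1: "Suc (Suc k') * (Suc (Suc n') choose Suc (Suc k')) = Suc (Suc n') * (Suc n' choose Suc k')" by (rule Suc_times_binomial)
  have e2: "Suc k' * (Suc n' choose Suc k') = Suc n' * (n' choose k')" by (rule Suc_times_binomial)
  have "Suc k' * (Suc (Suc k') * (Suc (Suc n') choose Suc (Suc k'))) = Suc k' * (Suc (Suc n') * (Suc n' choose Suc k'))"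
    by (simp only: e1)
  also have "\<dots> = Suc (Suc n') * (Suc k' * (Suc n' choose Suc k'))" by (simp only: mult.left_commute)
  also have "\<dots> = Suc (Suc n') * (Suc n' * (n' choose k'))" by (simp only: e2)
  finally have "Suc k' * (Suc (Suc k') * (Suc (Suc n') choose Suc (Suc k'))) = Suc (Suc n') * (Suc n' * (n' choose k'))" .
  hence "real (Suc k') * (real (Suc (Suc k')) * real (Suc (Suc n') choose Suc (Suc k'))) = real (Suc (Suc n')) * (real (Suc n') * real (n' choose k'))"
    by (simp only: of_nat_mult[symmetric])
  hence e: "(real k - 1) * (real k * real (n choose k)) = real n * ((real n - 1) * real ((n-2) choose (k-2)))"
    using nk by (simp del: binomial_Suc_Suc add: algebra_simps)
  have pos: "real (n choose k) > 0" using assms by simp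
  have "real (card (Bset n k i j)) = real ((n-2) choose (k-2))" using card_Bset_off[OF assms(1-4)] by simp
  moreover have "real (card (ksubsets n k)) = real (n choose k)" using card_ksubsets[of n k] by simp
  moreover have "real n > 1" using assms by simp
  ultimately show ?thesis using e pos
    by (simp add: divide_simps) (simp add: algebra_simps)
qed


definition cnt :: "(nat \<Rightarrow> nat set) \<Rightarrow> nat \<Rightarrow> nat \<Rightarrow> nat \<Rightarrow> nat" where
  "cnt f m i j = card {t\<in>{..<m}. i \<in> f t \<and> j \<in> f t}"

lemma frob_L2: "frob n M = L2_set (\<lambda>p. M (fst p) (snd p)) ({..<n} \<times> {..<n})"
  unfolding frob_def L2_set_def by (simp add: sum.cartesian_product split_beta)

lemma frob_nonneg: "0 \<le> frob n M"
  unfolding frob_def by (simp add: sum_nonneg)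

lemma frob_triangle: "frob n (\<lambda>i j. A i j + B i j) \<le> frob n A + frob n B"
  unfolding frob_L2 by (rule L2_set_triangle_ineq)

lemma frob_scale_bound:
  assumes a: "0 \<le> a" and h: "\<And>i j. i < n \<Longrightarrow> j < n \<Longrightarrow> \<bar>A i j\<bar> \<le> a * \<bar>M i j\<bar>"
  shows "frob n A \<le> a * frob n M"
proof -
  have "(\<Sum>i<n. \<Sum>j<n. (A i j)^2) \<le> (\<Sum>i<n. \<Sum>j<n. a^2 * (M i j)^2)"
  proof (intro sum_mono)
    fix i j assume "i \<in> {..<n}" "j \<in> {..<n}"
    hence "\<bar>A i j\<bar> \<le> a * \<bar>M i j\<bar>" using h by auto
    hence "\<bar>A i j\<bar>^2 \<le> (a * \<bar>M i j\<bar>)^2" by (intro power_mono) auto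
    thus "(A i j)^2 \<le> a^2 * (M i j)^2" by (simp add: power_mult_distrib)
  qed
  also have "\<dots> = a^2 * (\<Sum>i<n. \<Sum>j<n. (M i j)^2)" by (simp add: sum_distrib_left)
  finally have "sqrt (\<Sum>i<n. \<Sum>j<n. (A i j)^2) \<le> sqrt (a^2 * (\<Sum>i<n. \<Sum>j<n. (M i j)^2))"
    by (rule real_sqrt_le_mono)
  thus ?thesis using a by (simp add: frob_def real_sqrt_mult)
qed

lemma quad_restrict:
  fixes n :: nat
  assumes F: "F \<subseteq> {..<n}"
  shows "(\<Sum>i<n. \<Sum>j<n. (if i \<in> F \<and> j \<in> F then g i j else 0)) = (\<Sum>i\<in>F. \<Sum>j\<in>F. g i j)"
proof -
  have r: "(\<Sum>j<n. if j \<in> F then h j else 0) = sum h F" for h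
  proof -
    have "(\<Sum>j<n. if j \<in> F then h j else 0) = sum h ({..<n} \<inter> F)" by (rule sum.inter_restrict[symmetric]) simp
    also have "{..<n} \<inter> F = F" using F by blast
    finally show ?thesis .
  qed
  have "(\<Sum>i<n. \<Sum>j<n. (if i \<in> F \<and> j \<in> F then g i j else 0))
      = (\<Sum>i<n. if i \<in> F then (\<Sum>j<n. if j \<in> F then g i j else 0) else 0)"
    by (intro sum.cong) auto
  also have "\<dots> = (\<Sum>i<n. if i \<in> F then (\<Sum>j\<in>F. g i j) else 0)"
    by (simp add: r)
  also have "\<dots> = (\<Sum>i\<in>F. \<Sum>j\<in>F. g i j)"
    by (rule r)
  finally show ?thesis .
qed

lemma quad_cnt:
  assumes sub: "\<forall>t<m. f t \<subseteq> {..<n}"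
  shows "(\<Sum>i<n. \<Sum>j<n. x i * (real (cnt f m i j) * M i j) * x j)
       = (\<Sum>t<m. \<Sum>i\<in>f t. \<Sum>j\<in>f t. x i * M i j * x j)"
proof -
  have "(\<Sum>i<n. \<Sum>j<n. x i * (real (cnt f m i j) * M i j) * x j)
      = (\<Sum>i<n. \<Sum>j<n. \<Sum>t<m. (if i \<in> f t \<and> j \<in> f t then x i * M i j * x j else 0))"
  proof (intro sum.cong refl)
    fix i j
    have "real (cnt f m i j) = (\<Sum>t<m. if i \<in> f t \<and> j \<in> f t then 1 else 0)"
      unfolding cnt_def using card_filter_sum[of "{..<m}" "\<lambda>t. i \<in> f t \<and> j \<in> f t"] by simp
    hence "x i * (real (cnt f m i j) * M i j) * x j = (\<Sum>t<m. x i * ((if i \<in> f t \<and> j \<in> f t then 1 else 0) * M i j) * x j)"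
      by (simp add: sum_distrib_left sum_distrib_right)
    also have "\<dots> = (\<Sum>t<m. (if i \<in> f t \<and> j \<in> f t then x i * M i j * x j else 0))"
      by (intro sum.cong) auto
    finally show "x i * (real (cnt f m i j) * M i j) * x j = (\<Sum>t<m. (if i \<in> f t \<and> j \<in> f t then x i * M i j * x j else 0))" .
  qed
  also have "\<dots> = (\<Sum>t<m. \<Sum>i<n. \<Sum>j<n. (if i \<in> f t \<and> j \<in> f t then x i * M i j * x j else 0))"
    by (subst sum.swap) (subst (2) sum.swap, rule refl)
  also have "\<dots> = (\<Sum>t<m. \<Sum>i\<in>f t. \<Sum>j\<in>f t. x i * M i j * x j)"
    using sub by (intro sum.cong refl quad_restrict) auto
  finally show ?thesis .
qed

lemma det_bound:
  assumes sub: "\<forall>t<m. f t \<subseteq> {..<n}" and lam: "lm > 0" and c: "c \<ge> 0"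
    and dev: "\<forall>i<n. \<forall>j<n. \<bar>real (cnt f m i j) - (if i = j then (1+c)*lm else lm)\<bar> \<le> \<tau>"
    and tl: "\<tau> < lm" and t0: "0 \<le> \<tau>"
    and M: "M \<in> S_I m f" and fM: "frob n M = 1"
  shows "dist_psd n M \<le> c/(c+2) + 2*\<tau>/((c+2)*lm)"
proof -
  have psdM: "\<And>t. t < m \<Longrightarrow> psd_sub M (f t)" using M by (auto simp: S_I_def)
  have sym: "M i j = M j i" if ij: "i < n" "j < n" for i j
  proof (cases "i = j")
    case False
    have "\<bar>real (cnt f m i j) - lm\<bar> \<le> \<tau>" using dev[rule_format, OF ij] False by simp
    hence "real (cnt f m i j) > 0" using tl by linarith
    hence "{t\<in>{..<m}. i \<in> f t \<and> j \<in> f t} \<noteq> {}" unfolding cnt_def by (metis card.empty of_nat_0 less_irrefl)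
    then obtain t where "t < m" "i \<in> f t" "j \<in> f t" by auto
    thus ?thesis using psdM[of t] by (auto simp: psd_sub_def)
  qed simp
  define \<alpha> where "\<alpha> = 2/(c+2)"
  have a0: "\<alpha> \<ge> 0" using c by (simp add: \<alpha>_def)
  define N where "N i j = \<alpha>/lm * (real (cnt f m i j) * M i j)" for i j
  have psdN: "psd_sub N {..<n}"
    unfolding psd_sub_def
  proof (intro conjI ballI allI)
    fix i j assume "i \<in> {..<n}" "j \<in> {..<n}"
    moreover have "cnt f m i j = cnt f m j i" unfolding cnt_def by (simp add: conj_commute)
    ultimately show "N i j = N j i" using sym by (simp add: N_def)
  next
    fix x :: "nat \<Rightarrow> real"
    have q: "\<And>t. t<m \<Longrightarrow> 0 \<le> (\<Sum>i\<in>f t. \<Sum>j\<in>f t. x i * M i j * x j)" using psdM by (simp add: psd_sub_def)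
    have "(\<Sum>i\<in>{..<n}. \<Sum>j\<in>{..<n}. x i * N i j * x j) = \<alpha>/lm * (\<Sum>i<n. \<Sum>j<n. x i * (real (cnt f m i j) * M i j) * x j)"
      by (simp add: N_def sum_distrib_left algebra_simps)
    also have "\<dots> = \<alpha>/lm * (\<Sum>t<m. \<Sum>i\<in>f t. \<Sum>j\<in>f t. x i * M i j * x j)"
      using quad_cnt[OF sub] by simp
    finally have e: "(\<Sum>i\<in>{..<n}. \<Sum>j\<in>{..<n}. x i * N i j * x j) = \<alpha>/lm * (\<Sum>t<m. \<Sum>i\<in>f t. \<Sum>j\<in>f t. x i * M i j * x j)" .
    have "\<alpha>/lm * (\<Sum>t<m. \<Sum>i\<in>f t. \<Sum>j\<in>f t. x i * M i j * x j) \<ge> 0"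
      by (rule mult_nonneg_nonneg[OF _ sum_nonneg]) (use a0 lam q in auto)
    thus "0 \<le> (\<Sum>i\<in>{..<n}. \<Sum>j\<in>{..<n}. x i * N i j * x j)" using e by simp
  qed
  have "dist_psd n M \<le> frob n (\<lambda>i j. M i j - N i j)"
    unfolding dist_psd_def
    by (rule cInf_lower) (use psdN frob_nonneg in \<open>auto intro: bdd_belowI[of _ 0]\<close>)
  also have "frob n (\<lambda>i j. M i j - N i j) = frob n (\<lambda>i j. (if i = j then -(c/(c+2)) else c/(c+2)) * M i j
           + (- (\<alpha>/lm) * (real (cnt f m i j) - (if i = j then (1+c)*lm else lm)) * M i j))"
  proof -
    have "M i j - N i j = (if i = j then -(c/(c+2)) else c/(c+2)) * M i j
           + (- (\<alpha>/lm) * (real (cnt f m i j) - (if i = j then (1+c)*lm else lm)) * M i j)" for i j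
    proof -
      define e where "e = (if i = j then (1+c)*lm else lm)"
      define d where "d = real (cnt f m i j) - e"
      have c2: "c + 2 > 0" using c by simp
      have "N i j = \<alpha>/lm * ((e + d) * M i j)" by (simp add: N_def d_def)
      also have "\<dots> = \<alpha> * (e/lm) * M i j + \<alpha>/lm * d * M i j" using lam by (simp add: field_simps)
      also have "e/lm = (if i = j then 1+c else 1)" using lam by (simp add: e_def)
      finally have NE: "N i j = \<alpha> * (if i = j then 1+c else 1) * M i j + \<alpha>/lm * d * M i j" .
      have A1: "1 - \<alpha>*(1+c) = -(c/(c+2))" and A2: "1 - \<alpha> = c/(c+2)" using c2 by (simp_all add: \<alpha>_def field_simps)
      have "M i j - N i j = (1 - \<alpha> * (if i = j then 1+c else 1)) * M i j + (- (\<alpha>/lm) * d * M i j)"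
        unfolding NE by (simp add: algebra_simps)
      also have "1 - \<alpha> * (if i = j then 1+c else 1) = (if i = j then -(c/(c+2)) else c/(c+2))"
        using A1 A2 by simp
      finally show ?thesis by (simp add: d_def e_def)
    qed
    thus ?thesis by simp
  qed
  also have "\<dots> \<le> frob n (\<lambda>i j. (if i = j then -(c/(c+2)) else c/(c+2)) * M i j)
       + frob n (\<lambda>i j. - (\<alpha>/lm) * (real (cnt f m i j) - (if i = j then (1+c)*lm else lm)) * M i j)"
    by (rule frob_triangle)
  also have "\<dots> \<le> c/(c+2) * frob n M + (\<alpha>/lm*\<tau>) * frob n M"
  proof (rule add_mono)
    show "frob n (\<lambda>i j. (if i = j then -(c/(c+2)) else c/(c+2)) * M i j) \<le> c/(c+2) * frob n M"
    proof (rule frob_scale_bound)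
      show "0 \<le> c/(c+2)" using c by simp
      fix i j :: nat
      have "\<bar>if i = j then -(c/(c+2)) else c/(c+2)\<bar> = c/(c+2)" using c by simp
      thus "\<bar>(if i = j then -(c/(c+2)) else c/(c+2)) * M i j\<bar> \<le> c/(c+2) * \<bar>M i j\<bar>"
        by (simp only: abs_mult)
    qed
    show "frob n (\<lambda>i j. - (\<alpha>/lm) * (real (cnt f m i j) - (if i = j then (1+c)*lm else lm)) * M i j) \<le> (\<alpha>/lm*\<tau>) * frob n M"
    proof (rule frob_scale_bound)
      show "0 \<le> \<alpha>/lm*\<tau>" using a0 lam t0 by simp
    next
      fix i j assume ij: "i < n" "j < n"
      have "\<bar>real (cnt f m i j) - (if i = j then (1+c)*lm else lm)\<bar> \<le> \<tau>" using dev ij by auto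
      hence "\<alpha>/lm * \<bar>real (cnt f m i j) - (if i = j then (1+c)*lm else lm)\<bar> * \<bar>M i j\<bar> \<le> \<alpha>/lm * \<tau> * \<bar>M i j\<bar>"
        using a0 lam by (intro mult_right_mono mult_left_mono) auto
      thus "\<bar>- (\<alpha>/lm) * (real (cnt f m i j) - (if i = j then (1+c)*lm else lm)) * M i j\<bar> \<le> \<alpha>/lm*\<tau> * \<bar>M i j\<bar>"
        using a0 lam by (simp add: abs_mult)
    qed
  qed
  also have "\<dots> = c/(c+2) + 2*\<tau>/((c+2)*lm)" using fM by (simp add: \<alpha>_def)
  finally show ?thesis .
qed


lemma dist_psd_le_1:
  assumes "frob n M = 1" shows "dist_psd n M \<le> 1"
proof -
  have p0: "psd_sub (\<lambda>_ _. 0) {..<n}" by (simp add: psd_sub_def)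
  have mem: "frob n M \<in> {frob n (\<lambda>i j. M i j - N i j) |N. psd_sub N {..<n}}"
    by (intro CollectI exI[of _ "\<lambda>_ _. 0"]) (simp add: p0)
  have bdd: "bdd_below {frob n (\<lambda>i j. M i j - N i j) |N. psd_sub N {..<n}}"
    by (rule bdd_belowI[of _ 0]) (auto simp: frob_nonneg)
  have "dist_psd n M \<le> frob n M"
    unfolding dist_psd_def by (rule cInf_lower[OF mem bdd])
  thus ?thesis using assms by simp
qed

lemma S_I_witness:
  assumes n: "n > 0"
  shows "\<exists>M. M \<in> S_I m f \<and> frob n M = 1"
proof -
  define M where "M i j = (if i = j then 1 / sqrt (real n) else 0)" for i j :: nat
  have "psd_sub M J" for J
    unfolding psd_sub_def
  proof (intro conjI ballI allI)
    fix i j show "M i j = M j i" by (simp add: M_def)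
  next
    fix x :: "nat \<Rightarrow> real"
    show "0 \<le> (\<Sum>i\<in>J. \<Sum>j\<in>J. x i * M i j * x j)"
      by (intro sum_nonneg) (auto simp: M_def)
  qed
  hence "M \<in> S_I m f" by (simp add: S_I_def)
  moreover have "frob n M = 1"
  proof -
    have "(\<Sum>i<n. \<Sum>j<n. (M i j)^2) = (\<Sum>i<n. 1 / real n)"
    proof (rule sum.cong[OF refl])
      fix i assume i: "i \<in> {..<n}"
      have "(\<Sum>j<n. (M i j)^2) = (\<Sum>j<n. if j = i then 1 / real n else 0)"
        by (rule sum.cong) (auto simp: M_def power_divide)
      also have "\<dots> = 1 / real n" using i by simp
      finally show "(\<Sum>j<n. (M i j)^2) = 1 / real n" .
    qed
    also have "\<dots> = 1" using n by simp
    finally show ?thesis by (simp add: frob_def)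
  qed
  ultimately show ?thesis by blast
qed

lemma dist_bar_le:
  assumes n: "n > 0" and h: "\<And>M. M \<in> S_I m f \<Longrightarrow> frob n M = 1 \<Longrightarrow> dist_psd n M \<le> b"
  shows "dist_bar n (S_I m f) \<le> b"
  unfolding dist_bar_def
  by (rule cSup_least) (use S_I_witness[OF n, of m f] h in auto)



lemma pd_id: fixes N K :: real assumes "K > 1" "N > K"
  shows "(1 + (N-K)/(K-1)) * (K*(K-1)/(N*(N-1))) = K/N"
proof -
  have a: "K - 1 \<noteq> 0" "N - 1 \<noteq> 0" "N \<noteq> 0" using assms by auto
  have d: "(K-1)*(N*(N-1)) \<noteq> 0" using a by simp
  have "1 + (N-K)/(K-1) = (N-1)/(K-1)" using a by (simp add: field_simps)
  hence "(1 + (N-K)/(K-1)) * (K*(K-1)/(N*(N-1))) = ((N-1)*(K*(K-1))) / ((K-1)*(N*(N-1)))" by simp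
  also have "\<dots> = K/N"
    apply (subst frac_eq_eq[OF d])
     apply (simp add: a)
    apply (simp add: algebra_simps)
    done
  finally show ?thesis .
qed
lemma r_id: fixes N K e :: real assumes "K > 1" "N > K" "e > 0"
  shows "e^2 * ((N-K)/(K-1))^2 * (K*(K-1)/(N*(N-1))) / (12 * (1 + (N-K)/(K-1))) = 1 / (12 * N * (N - 1)^2 / (e^2 * (N - K)^2 * K))"
proof -
  have a: "K - 1 \<noteq> 0" "N - 1 \<noteq> 0" "N \<noteq> 0" "N - K \<noteq> 0" "e \<noteq> 0" "K \<noteq> 0" using assms by auto
  have d1: "(K-1)^2 * (N*(N-1)) * (12 * (N-1)) \<noteq> 0" using a by simp
  have d2: "12 * N * (N - 1)^2 \<noteq> 0" using a by simp
  have "1 + (N-K)/(K-1) = (N-1)/(K-1)" using a by (simp add: field_simps)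
  hence "e^2 * ((N-K)/(K-1))^2 * (K*(K-1)/(N*(N-1))) / (12 * (1 + (N-K)/(K-1)))
     = (e^2 * (N-K)^2 * (K*(K-1)) * (K-1)) / ((K-1)^2 * (N*(N-1)) * (12 * (N-1)))"
    by (simp add: power_divide)
  also have "\<dots> = (e^2 * (N - K)^2 * K) / (12 * N * (N - 1)^2)"
    apply (subst frac_eq_eq[OF d1 d2])
    apply (simp add: algebra_simps power2_eq_square)
    done
  also have "\<dots> = 1 / (12 * N * (N - 1)^2 / (e^2 * (N - K)^2 * K))" by simp
  finally show ?thesis .
qed

lemma main_case:
  fixes n k m :: nat and \<epsilon> \<delta> :: real
  assumes k2: "2 \<le> k" and kn: "k < n" and eps: "\<epsilon> > 0" and d0: "0 < \<delta>" and d1: "\<delta> < 1"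
    and mX: "real m \<ge> 12 * real n * (real n - 1)^2 / (\<epsilon>^2 * (real n - real k)^2 * real k) * ln (2 * (real n)^2 / \<delta>)"
    and b1: "(1+\<epsilon>) * (real n - real k) / (real n + real k - 2) < 1"
  shows "measure_pmf.prob (sample_pmf n k m)
           {I. dist_bar n (S_I m I) \<le> (1 + \<epsilon>) * (real n - real k) / (real n + real k - 2)} \<ge> 1 - \<delta>"
proof -
  define N where "N = real n"
  define Kr where "Kr = real k"
  have N1: "N - Kr \<ge> 1" "Kr \<ge> 2" "N \<ge> 3" using k2 kn by (auto simp: N_def Kr_def)
  define c where "c = (N - Kr) / (Kr - 1)"
  have c0: "c > 0" using N1 by (simp add: c_def)
  define \<beta> where "\<beta> = (1 + \<epsilon>) * (real n - real k) / (real n + real k - 2)"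
  have ec: "\<epsilon> * c < 2"
  proof -
    have "(1+\<epsilon>) * (N - Kr) < N + Kr - 2" using b1 N1 by (simp add: N_def Kr_def divide_simps split: if_splits)
    hence "\<epsilon> * (N - Kr) < 2 * (Kr - 1)" by (simp add: algebra_simps)
    thus ?thesis using N1 by (simp add: c_def divide_simps mult.commute)
  qed
  have cbeta: "c/(c+2) + \<epsilon>*c/(c+2) = \<beta>"
  proof -
    have "c + 2 = (N + Kr - 2)/(Kr - 1)" using N1 by (simp add: c_def field_simps)
    hence h: "c/(c+2) = (N - Kr)/(N + Kr - 2)" using N1 by (simp add: c_def)
    have "c/(c+2) + \<epsilon>*c/(c+2) = (1+\<epsilon>) * (c/(c+2))" by (simp add: distrib_right add_divide_distrib)
    hence "c/(c+2) + \<epsilon>*c/(c+2) = (1+\<epsilon>) * ((N - Kr)/(N + Kr - 2))" by (simp only: h)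
    thus ?thesis by (simp add: \<beta>_def N_def Kr_def)
  qed
  define L where "L = ln (2 * N^2 / \<delta>)"
  have N2: "1 \<le> N^2" using N1 by (intro one_le_power) simp
  have "1 < 2 * N^2 / \<delta>" using N2 d0 d1 by (simp add: less_divide_eq)
  hence L0: "L > 0" by (simp add: L_def)
  have expL: "exp (-L) = \<delta> / (2 * N^2)" using N1 d0 by (simp add: L_def exp_minus)
  define X where "X = 12 * N * (N - 1)^2 / (\<epsilon>^2 * (N - Kr)^2 * Kr)"
  have X0: "X > 0" using N1 eps by (simp add: X_def)
  have mXL: "real m \<ge> X * L" using mX by (simp add: X_def L_def N_def Kr_def)
  have m0: "real m > 0" using mXL X0 L0 by (smt (verit) mult_pos_pos)
  define po where "po = Kr * (Kr - 1) / (N * (N - 1))"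
  define lm where "lm = real m * po"
  have po0: "po > 0" using N1 by (simp add: po_def)
  have lm0: "lm > 0" using m0 po0 by (simp add: lm_def)
  have pd: "(1 + c) * po = Kr / N" using pd_id[of Kr N] N1 by (simp add: c_def po_def)
  define \<tau> where "\<tau> = \<epsilon> * c * lm / 2"
  have t0: "\<tau> \<ge> 0" using eps c0 lm0 by (simp add: \<tau>_def)
  have tl: "\<tau> < lm" using ec lm0 by (simp add: \<tau>_def)
  have key: "\<tau>^2 / (3 * ((1+c) * lm)) \<ge> L"
  proof -
    have r: "\<epsilon>^2 * c^2 * po / (12 * (1+c)) = 1 / X"
      using r_id[of Kr N \<epsilon>] N1 eps by (simp add: c_def po_def X_def)
    have d1: "3 * ((1+c) * lm) \<noteq> 0" and d2: "12 * (1+c) \<noteq> 0" using lm0 c0 by auto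
    have "\<tau>^2 / (3 * ((1+c) * lm)) = (real m * \<epsilon>^2 * c^2 * po) / (12 * (1+c))"
      apply (subst frac_eq_eq[OF d1 d2])
      apply (simp add: \<tau>_def lm_def algebra_simps power2_eq_square)
      done
    also have "\<dots> = real m * (\<epsilon>^2 * c^2 * po / (12 * (1+c)))" by simp
    also have "\<dots> = real m / X" using r by simp
    also have "\<dots> \<ge> L" using mXL X0 by (simp add: field_simps mult.commute)
    finally show ?thesis .
  qed
  define e where "e i j = (if i = j then (1+c)*lm else lm)" for i j :: nat
  define K where "K = ksubsets n k"
  define S where "S = PiE {..<m} (\<lambda>_. K)"
  have Kfin: "finite K" by (simp add: K_def finite_ksubsets)
  have Kne: "K \<noteq> {}"
  proof
    assume "K = {}"
    hence "card K = 0" by simp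
    thus False using card_ksubsets[of n k] kn by (simp add: K_def)
  qed
  have Sfin: "finite S" using Kfin by (simp add: S_def finite_PiE)
  have Sne: "S \<noteq> {}" using Kne by (simp add: S_def PiE_eq_empty_iff)
  have mu: "e i j = real m * (real (card (Bset n k i j)) / real (card K))" if "i < n" "j < n" for i j
  proof (cases "i = j")
    case True
    have "real m * (real (card (Bset n k i j)) / real (card K)) = real m * (Kr / N)"
      using ratio_diag[of i n k] that True k2 kn by (simp add: K_def Kr_def N_def)
    also have "\<dots> = real m * ((1 + c) * po)" by (simp only: pd)
    also have "\<dots> = (1+c) * lm" by (simp add: lm_def algebra_simps)
    finally show ?thesis using True by (simp add: e_def)
  next
    case False
    have "real m * (real (card (Bset n k i j)) / real (card K)) = real m * po"
      using ratio_off[of i n j k] that False k2 kn by (simp add: K_def Kr_def N_def po_def)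
    thus ?thesis using False by (simp add: e_def lm_def)
  qed
  have cntB: "real (card {t\<in>{..<m}. f t \<in> Bset n k i j}) = real (cnt f m i j)" if "f \<in> S" for f i j
  proof -
    have "{t\<in>{..<m}. f t \<in> Bset n k i j} = {t\<in>{..<m}. i \<in> f t \<and> j \<in> f t}"
      using that by (auto simp: S_def Bset_def K_def PiE_mem)
    thus ?thesis by (simp add: cnt_def)
  qed
  define G where "G = {f\<in>S. \<forall>i<n. \<forall>j<n. \<bar>real (cnt f m i j) - e i j\<bar> \<le> \<tau>}"
  have Gev: "G \<subseteq> {I. dist_bar n (S_I m I) \<le> \<beta>}"
  proof
    fix f assume f: "f \<in> G"
    have sub: "\<forall>t<m. f t \<subseteq> {..<n}" using f by (auto simp: G_def S_def K_def ksubsets_def PiE_mem)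
    have dev: "\<forall>i<n. \<forall>j<n. \<bar>real (cnt f m i j) - (if i = j then (1+c)*lm else lm)\<bar> \<le> \<tau>"
      using f by (simp add: G_def e_def)
    have "dist_bar n (S_I m f) \<le> c/(c+2) + 2*\<tau>/((c+2)*lm)"
      using N1 by (intro dist_bar_le det_bound[OF sub lm0 _ dev tl t0]) (auto simp: N_def c0 less_imp_le)
    also have "2*\<tau>/((c+2)*lm) = \<epsilon>*c/(c+2)" using lm0 by (simp add: \<tau>_def)
    finally show "f \<in> {I. dist_bar n (S_I m I) \<le> \<beta>}" using cbeta by simp
  qed
  define u where "u i j = \<tau> / e i j" for i j
  define Up where "Up i j = {f\<in>S. (1 + u i j) * e i j \<le> real (card {t\<in>{..<m}. f t \<in> Bset n k i j})}" for i j
  define Lo where "Lo i j = {f\<in>S. real (card {t\<in>{..<m}. f t \<in> Bset n k i j}) \<le> (1 - u i j) * e i j}" for i j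
  have e0: "e i j > 0" "e i j \<le> (1+c)*lm" "lm \<le> e i j" for i j using lm0 c0 by (auto simp: e_def)
  have bnd: "exp (- e i j * (u i j)^2 / 3) \<le> \<delta> / (2 * N^2)" for i j
  proof -
    have "- e i j * (u i j)^2 / 3 = - (\<tau>^2 / (3 * e i j))" using e0(1)[of i j] by (simp add: u_def power2_eq_square field_simps)
    also have "\<dots> \<le> - (\<tau>^2 / (3 * ((1+c) * lm)))"
      using e0[of i j] t0 lm0 c0 by (intro le_imp_neg_le divide_left_mono) (auto intro!: mult_pos_pos)
    also have "\<dots> \<le> -L" using key by simp
    finally show ?thesis using expL by (metis exp_le_cancel_iff)
  qed
  have u01: "0 \<le> u i j" "u i j \<le> 1" for i j
  proof -
    show "0 \<le> u i j" using e0(1)[of i j] t0 by (simp add: u_def)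
    have "u i j \<le> \<tau> / lm" using e0[of i j] t0 lm0 unfolding u_def by (intro divide_left_mono) auto
    moreover have "\<tau> / lm < 1" using tl lm0 by simp
    ultimately show "u i j \<le> 1" by linarith
  qed
  have cUp: "real (card (Up i j)) \<le> \<delta> / (2 * N^2) * real (card S)" if "i < n" "j < n" for i j
  proof -
    have "real (card (Up i j)) \<le> exp (- e i j * (u i j)^2 / 3) * real (card S)"
      unfolding Up_def S_def
      by (rule chernoff_up[OF Kfin _ Kne u01 mu[OF that]]) (auto simp: Bset_def K_def)
    also have "\<dots> \<le> \<delta> / (2 * N^2) * real (card S)" by (intro mult_right_mono bnd) auto
    finally show ?thesis .
  qed
  have cLo: "real (card (Lo i j)) \<le> \<delta> / (2 * N^2) * real (card S)" if "i < n" "j < n" for i j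
  proof -
    have "real (card (Lo i j)) \<le> exp (- e i j * (u i j)^2 / 3) * real (card S)"
      unfolding Lo_def S_def
      by (rule chernoff_lo[OF Kfin _ Kne u01(1) mu[OF that]]) (auto simp: Bset_def K_def)
    also have "\<dots> \<le> \<delta> / (2 * N^2) * real (card S)" by (intro mult_right_mono bnd) auto
    finally show ?thesis .
  qed
  have badsub: "S - G \<subseteq> (\<Union>i\<in>{..<n}. \<Union>j\<in>{..<n}. Up i j \<union> Lo i j)"
  proof
    fix f assume f: "f \<in> S - G"
    then obtain i j where ij: "i < n" "j < n" "\<bar>real (cnt f m i j) - e i j\<bar> > \<tau>"
      by (auto simp: G_def not_le)
    have ue: "u i j * e i j = \<tau>" using e0(1)[of i j] by (simp add: u_def)
    have "real (cnt f m i j) \<ge> (1 + u i j) * e i j \<or> real (cnt f m i j) \<le> (1 - u i j) * e i j"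
      using ij(3) ue by (auto simp: algebra_simps abs_if split: if_splits)
    hence "f \<in> Up i j \<union> Lo i j" using f cntB[of f i j] by (auto simp: Up_def Lo_def)
    thus "f \<in> (\<Union>i\<in>{..<n}. \<Union>j\<in>{..<n}. Up i j \<union> Lo i j)" using ij by blast
  qed
  have "card (S - G) \<le> card (\<Union>i\<in>{..<n}. \<Union>j\<in>{..<n}. Up i j \<union> Lo i j)"
    by (rule card_mono[OF _ badsub]) (auto simp: Up_def Lo_def Sfin)
  also have "\<dots> \<le> (\<Sum>i<n. card (\<Union>j\<in>{..<n}. Up i j \<union> Lo i j))" by (rule card_UN_le) simp
  also have "\<dots> \<le> (\<Sum>i<n. \<Sum>j<n. card (Up i j \<union> Lo i j))" by (intro sum_mono card_UN_le) simp
  also have "\<dots> \<le> (\<Sum>i<n. \<Sum>j<n. card (Up i j) + card (Lo i j))" by (intro sum_mono card_Un_le)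
  finally have cb: "card (S - G) \<le> (\<Sum>i<n. \<Sum>j<n. card (Up i j) + card (Lo i j))" .
  have "real (card (S - G)) \<le> (\<Sum>i<n. \<Sum>j<n. real (card (Up i j)) + real (card (Lo i j)))"
    using of_nat_mono[OF cb, where 'a=real] by simp
  also have "\<dots> \<le> (\<Sum>i<n. \<Sum>j<n. 2 * (\<delta> / (2 * N^2) * real (card S)))"
  proof (intro sum_mono)
    fix i j assume "i \<in> {..<n}" "j \<in> {..<n}"
    hence "real (card (Up i j)) \<le> \<delta> / (2 * N^2) * real (card S)" "real (card (Lo i j)) \<le> \<delta> / (2 * N^2) * real (card S)"
      using cUp cLo by auto
    thus "real (card (Up i j)) + real (card (Lo i j)) \<le> 2 * (\<delta> / (2 * N^2) * real (card S))" by linarith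
  qed
  also have "\<dots> = \<delta> * real (card S)" using N1 by (simp add: N_def power2_eq_square)
  finally have bad: "real (card (S - G)) \<le> \<delta> * real (card S)" .
  have GS: "G \<subseteq> S" by (auto simp: G_def)
  have cS: "real (card S) > 0" using Sfin Sne by (simp add: card_gt_0_iff)
  have "real (card G) = real (card S) - real (card (S - G))"
    using GS Sfin by (simp add: card_Diff_subset finite_subset of_nat_diff card_mono)
  hence cG: "real (card G) \<ge> (1 - \<delta>) * real (card S)" using bad by (simp add: algebra_simps)
  have "card G \<le> card (S \<inter> {I. dist_bar n (S_I m I) \<le> \<beta>})"
    using Gev GS Sfin by (intro card_mono) auto
  hence "(1 - \<delta>) * real (card S) \<le> real (card (S \<inter> {I. dist_bar n (S_I m I) \<le> \<beta>}))" using cG by linarith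
  hence "1 - \<delta> \<le> real (card (S \<inter> {I. dist_bar n (S_I m I) \<le> \<beta>})) / real (card S)"
    using cS by (simp add: divide_simps)
  also have "\<dots> = measure_pmf.prob (sample_pmf n k m) {I. dist_bar n (S_I m I) \<le> \<beta>}"
    using measure_pmf_of_set[OF Sne Sfin] by (simp add: sample_pmf_def S_def K_def)
  finally show ?thesis by (simp add: \<beta>_def)
qed

theorem theorem5:
  fixes n k :: nat and \<epsilon> \<delta> :: real
  assumes "2 \<le> k" and "k \<le> n - 1" and "\<epsilon> > 0" and "\<delta> > 0"
  defines "m \<equiv> nat \<lceil>12 * real n * (real n - 1)^2 / (\<epsilon>^2 * (real n - real k)^2 * real k)
                      * ln (2 * (real n)^2 / \<delta>)\<rceil>"
  shows "measure_pmf.prob (sample_pmf n k m)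
           {I. dist_bar n (S_I m I) \<le> (1 + \<epsilon>) * (real n - real k) / (real n + real k - 2)}
         \<ge> 1 - \<delta>"
  proof -
  have k2: "2 \<le> k" and kn: "k < n" using assms(1,2) by auto
  have mX: "real m \<ge> 12 * real n * (real n - 1)^2 / (\<epsilon>^2 * (real n - real k)^2 * real k) * ln (2 * (real n)^2 / \<delta>)"
    unfolding m_def by (rule real_nat_ceiling_ge)
  show ?thesis
  proof (cases "\<delta> < 1")
    case False
    have "0 \<le> measure_pmf.prob (sample_pmf n k m)
           {I. dist_bar n (S_I m I) \<le> (1 + \<epsilon>) * (real n - real k) / (real n + real k - 2)}"
      by (rule measure_nonneg)
    thus ?thesis using False by linarith
  next
    case d1: True
    show ?thesis
    proof (cases "(1+\<epsilon>) * (real n - real k) / (real n + real k - 2) < 1")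
      case True
      show ?thesis by (rule main_case[OF k2 kn assms(3,4) d1 mX True])
    next
      case False
      have n0: "n > 0" using kn by simp
      have "{I. dist_bar n (S_I m I) \<le> (1 + \<epsilon>) * (real n - real k) / (real n + real k - 2)} = UNIV"
      proof -
        have b: "1 \<le> (1 + \<epsilon>) * (real n - real k) / (real n + real k - 2)" using False by linarith
        have "dist_bar n (S_I m I) \<le> (1 + \<epsilon>) * (real n - real k) / (real n + real k - 2)" for I
          by (rule order_trans[OF dist_bar_le[OF n0 dist_psd_le_1] b])
        thus ?thesis by auto
      qed
      moreover have "measure_pmf.prob (sample_pmf n k m) UNIV = 1"
        using prob_space.prob_space[OF prob_space_measure_pmf] by simp
      ultimately show ?thesis using assms(4) by simp
    qed
  qed
qed

end
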